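(* A regular language $L\subseteq\Sigma^*$ is biRFSA if and only if it is topological. Moreover, if $L$ is topological, then the map $\theta\colon J(\mathrm{LQ}(L))\to J(\mathrm{LQ}(L^r))$ defined by $\mathrm{dr}_L(\theta(j))=\tau(j)$, where $\tau(j)=\bigcup\{X\in\mathrm{LQ}(L): j\not\subseteq X\}$, is an nfa isomorphism from $N_L$ to $(N_{L^r})^r$.
   Context: $u^{-1}L=\{w:uw\in L\}$, $U^{-1}L=\bigcup_{u\in U}u^{-1}L$; $w^r$ is the reversal of $w$, $K^r=\{w^r:w\in K\}$, $\overline K=\Sigma^*\setminus K$. $\mathrm{LQ}(L)$ is the finite lattice (under $\subseteq$) of finite unions (including $\emptyset$) of left derivatives of $L$; $J(S)$ is the set of join-irreducible elements of a finite lattice $S$. $L$ is topological if $\mathrm{LQ}(L)$ is a distributive lattice. The canonical residual automaton $N_L$ is the nfa with states $J(\mathrm{LQ}(L))$, transitions $X\xrightarrow{a}Y$ iff $Y\subseteq a^{-1}X$, initial states those $X\subseteq L$, final states those $X$ with $\epsilon\in X$. For an nfa $N$, $N^r$ is its reverse (transitions reversed, initial and final states swapped). $L$ is biRFSA if $N_L$ is isomorphic (as an nfa) to $(N_{L^r})^r$. $\mathrm{dr}_L\colon\mathrm{LQ}(L^r)\to\mathrm{LQ}(L)$, $K\mapsto(\overline{K^r})^{-1}L$, is an order-reversing bijection which restricts to a bijection from $J(\mathrm{LQ}(L^r))$ onto the meet-irreducible elements of $\mathrm{LQ}(L)$. *)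

theory Defs
  imports Main
begin

definition regular :: "'a set \<Rightarrow> 'a list set \<Rightarrow> bool" where
  "regular \<Sigma> L \<longleftrightarrow> (\<exists>(Q::nat set) q0 \<delta> F. finite Q \<and> q0 \<in> Q \<and>
      (\<forall>q\<in>Q. \<forall>a\<in>\<Sigma>. \<delta> q a \<in> Q) \<and> F \<subseteq> Q \<and>
      L = {w \<in> lists \<Sigma>. foldl \<delta> q0 w \<in> F})"

definition lderiv :: "'a list \<Rightarrow> 'a list set \<Rightarrow> 'a list set" where
  "lderiv u L = {w. u @ w \<in> L}"

definition lderivs :: "'a list set \<Rightarrow> 'a list set \<Rightarrow> 'a list set" where
  "lderivs U L = (\<Union>u\<in>U. lderiv u L)"

definition revL :: "'a list set \<Rightarrow> 'a list set" where
  "revL K = rev ` K"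

definition compl :: "'a set \<Rightarrow> 'a list set \<Rightarrow> 'a list set" where
  "compl \<Sigma> K = lists \<Sigma> - K"

definition LQ :: "'a set \<Rightarrow> 'a list set \<Rightarrow> 'a list set set" where
  "LQ \<Sigma> L = {\<Union>S | S. finite S \<and> S \<subseteq> {lderiv u L | u. u \<in> lists \<Sigma>}}"

definition is_sup :: "'b set set \<Rightarrow> 'b set \<Rightarrow> 'b set \<Rightarrow> 'b set \<Rightarrow> bool" where
  "is_sup S x y m \<longleftrightarrow> m \<in> S \<and> x \<subseteq> m \<and> y \<subseteq> m \<and> (\<forall>z\<in>S. x \<subseteq> z \<and> y \<subseteq> z \<longrightarrow> m \<subseteq> z)"

definition is_inf :: "'b set set \<Rightarrow> 'b set \<Rightarrow> 'b set \<Rightarrow> 'b set \<Rightarrow> bool" where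
  "is_inf S x y m \<longleftrightarrow> m \<in> S \<and> m \<subseteq> x \<and> m \<subseteq> y \<and> (\<forall>z\<in>S. z \<subseteq> x \<and> z \<subseteq> y \<longrightarrow> z \<subseteq> m)"

definition supS :: "'b set set \<Rightarrow> 'b set \<Rightarrow> 'b set \<Rightarrow> 'b set" where
  "supS S x y = (THE m. is_sup S x y m)"

definition infS :: "'b set set \<Rightarrow> 'b set \<Rightarrow> 'b set \<Rightarrow> 'b set" where
  "infS S x y = (THE m. is_inf S x y m)"

definition botS :: "'b set set \<Rightarrow> 'b set" where
  "botS S = (THE b. b \<in> S \<and> (\<forall>y\<in>S. b \<subseteq> y))"

definition distributive_lattice :: "'b set set \<Rightarrow> bool" where
  "distributive_lattice S \<longleftrightarrow>
     (\<forall>x\<in>S. \<forall>y\<in>S. (\<exists>m. is_sup S x y m) \<and> (\<exists>m. is_inf S x y m)) \<and>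
     (\<forall>x\<in>S. \<forall>y\<in>S. \<forall>z\<in>S. infS S x (supS S y z) = supS S (infS S x y) (infS S x z))"

definition JI :: "'b set set \<Rightarrow> 'b set set" where
  "JI S = {x \<in> S. x \<noteq> botS S \<and> (\<forall>y\<in>S. \<forall>z\<in>S. x = supS S y z \<longrightarrow> x = y \<or> x = z)}"

record ('s, 'a) nfa =
  states :: "'s set"
  trans :: "('s \<times> 'a \<times> 's) set"
  init :: "'s set"
  final :: "'s set"

definition nfa_rev :: "('s, 'a) nfa \<Rightarrow> ('s, 'a) nfa" where
  "nfa_rev N = \<lparr> states = states N, trans = {(q, a, p). (p, a, q) \<in> trans N},
                 init = final N, final = init N \<rparr>"

definition nfa_iso :: "('s \<Rightarrow> 't) \<Rightarrow> ('s, 'a) nfa \<Rightarrow> ('t, 'a) nfa \<Rightarrow> bool" where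
  "nfa_iso f N M \<longleftrightarrow> bij_betw f (states N) (states M) \<and>
     (\<forall>p\<in>states N. \<forall>q\<in>states N. \<forall>a. (p, a, q) \<in> trans N \<longleftrightarrow> (f p, a, f q) \<in> trans M) \<and>
     (\<forall>p\<in>states N. p \<in> init N \<longleftrightarrow> f p \<in> init M) \<and>
     (\<forall>p\<in>states N. p \<in> final N \<longleftrightarrow> f p \<in> final M)"

definition nfa_isomorphic :: "('s, 'a) nfa \<Rightarrow> ('t, 'a) nfa \<Rightarrow> bool" where
  "nfa_isomorphic N M \<longleftrightarrow> (\<exists>f. nfa_iso f N M)"

definition canonical_RFSA :: "'a set \<Rightarrow> 'a list set \<Rightarrow> ('a list set, 'a) nfa" where
  "canonical_RFSA \<Sigma> L = \<lparr> states = JI (LQ \<Sigma> L),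
     trans = {(X, a, Y). X \<in> JI (LQ \<Sigma> L) \<and> Y \<in> JI (LQ \<Sigma> L) \<and> a \<in> \<Sigma> \<and> Y \<subseteq> lderiv [a] X},
     init = {X \<in> JI (LQ \<Sigma> L). X \<subseteq> L},
     final = {X \<in> JI (LQ \<Sigma> L). [] \<in> X} \<rparr>"

definition topological :: "'a set \<Rightarrow> 'a list set \<Rightarrow> bool" where
  "topological \<Sigma> L \<longleftrightarrow> distributive_lattice (LQ \<Sigma> L)"

definition biRFSA :: "'a set \<Rightarrow> 'a list set \<Rightarrow> bool" where
  "biRFSA \<Sigma> L \<longleftrightarrow> nfa_isomorphic (canonical_RFSA \<Sigma> L) (nfa_rev (canonical_RFSA \<Sigma> (revL L)))"

definition dr :: "'a set \<Rightarrow> 'a list set \<Rightarrow> 'a list set \<Rightarrow> 'a list set" where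
  "dr \<Sigma> L K = lderivs (compl \<Sigma> (revL K)) L"

definition tau :: "'a set \<Rightarrow> 'a list set \<Rightarrow> 'a list set \<Rightarrow> 'a list set" where
  "tau \<Sigma> L j = \<Union>{X \<in> LQ \<Sigma> L. \<not> j \<subseteq> X}"

definition theta :: "'a set \<Rightarrow> 'a list set \<Rightarrow> 'a list set \<Rightarrow> 'a list set" where
  "theta \<Sigma> L j = (THE k. k \<in> LQ \<Sigma> (revL L) \<and> dr \<Sigma> L k = tau \<Sigma> L j)"

end

theory Submission
  imports Defs
begin


definition uclosed :: "'b set set \<Rightarrow> bool" where
 "uclosed S \<longleftrightarrow> {} \<in> S \<and> (\<forall>x\<in>S. \<forall>y\<in>S. x \<union> y \<in> S)"

definition prime_in :: "'b set set \<Rightarrow> 'b set \<Rightarrow> bool" where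
 "prime_in S j \<longleftrightarrow> (\<forall>A\<in>S. \<forall>B\<in>S. j \<subseteq> A \<union> B \<longrightarrow> j \<subseteq> A \<or> j \<subseteq> B)"

lemma supS_union: "uclosed S \<Longrightarrow> x\<in>S \<Longrightarrow> y\<in>S \<Longrightarrow> supS S x y = x \<union> y"
  unfolding supS_def
  apply (rule the_equality)
   apply (auto simp: is_sup_def uclosed_def)
  done

lemma botS_empty: "uclosed S \<Longrightarrow> botS S = {}"
  unfolding botS_def
  by (rule the_equality) (auto simp: uclosed_def)

lemma JI_char: "uclosed S \<Longrightarrow> JI S = {x\<in>S. x \<noteq> {} \<and> (\<forall>y\<in>S. \<forall>z\<in>S. x = y \<union> z \<longrightarrow> x = y \<or> x = z)}"
  unfolding JI_def by (auto simp: botS_empty supS_union)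

lemma JI_D:
  assumes "uclosed S" "x \<in> JI S"
  shows "x \<in> S" "x \<noteq> {}" "\<And>y z. y\<in>S \<Longrightarrow> z\<in>S \<Longrightarrow> x = y \<union> z \<Longrightarrow> x = y \<or> x = z"
  using assms by (auto simp: JI_char)

lemma uclosed_Union: assumes u: "uclosed S" shows "finite T \<Longrightarrow> T \<subseteq> S \<Longrightarrow> \<Union>T \<in> S"
  by (induction T rule: finite_induct) (use u in \<open>auto simp: uclosed_def\<close>)

lemma JI_in_union:
  assumes u: "uclosed S" and j: "x \<in> JI S"
  shows "finite T \<Longrightarrow> T \<subseteq> S \<Longrightarrow> x = \<Union>T \<Longrightarrow> x \<in> T"
proof (induction T rule: finite_induct)
  case empty thus ?case using JI_D[OF u j] by auto
next
  case (insert t T)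
  have "\<Union>T \<in> S" using uclosed_Union[OF u insert(1)] insert(4) by auto
  moreover have "t \<in> S" using insert(4) by auto
  ultimately have "x = t \<or> x = \<Union>T" using JI_D(3)[OF u j, of t "\<Union>T"] insert(5) by auto
  thus ?case using insert by auto
qed

lemma decomp:
  assumes u: "uclosed S" and f: "finite S"
  shows "X \<in> S \<Longrightarrow> X = \<Union>{j\<in>JI S. j \<subseteq> X}"
proof (induction X rule: measure_induct_rule[where f="\<lambda>X. card {Z\<in>S. Z \<subseteq> X}"])
  case (less X)
  show ?case
  proof (cases "X \<in> JI S \<or> X = {}")
    case True
    show ?thesis
    proof
      show "X \<subseteq> \<Union>{j\<in>JI S. j \<subseteq> X}" using True by blast
    qed blast
  next
    case False
    then obtain y z where yz: "y\<in>S" "z\<in>S" "X = y \<union> z" "X \<noteq> y" "X \<noteq> z"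
      using less.prems False unfolding JI_char[OF u] by blast
    have lt: "card {Z\<in>S. Z \<subseteq> w} < card {Z\<in>S. Z \<subseteq> X}" if "w \<subseteq> X" "w \<noteq> X" for w
    proof (rule psubset_card_mono)
      show "finite {Z\<in>S. Z \<subseteq> X}" by (rule finite_subset[OF _ f]) blast
      have "{Z\<in>S. Z\<subseteq>w} \<subseteq> {Z\<in>S. Z\<subseteq>X}" using that by blast
      moreover have "X \<in> {Z\<in>S. Z\<subseteq>X}" "X \<notin> {Z\<in>S. Z\<subseteq>w}" using that less.prems by auto
      ultimately show "{Z\<in>S. Z\<subseteq>w} \<subset> {Z\<in>S. Z\<subseteq>X}" by blast
    qed
    have a: "y \<subseteq> X" "y \<noteq> X" "z \<subseteq> X" "z \<noteq> X" using yz by auto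
    have "y = \<Union>{j\<in>JI S. j \<subseteq> y}" "z = \<Union>{j\<in>JI S. j \<subseteq> z}"
      by (rule less.IH[OF lt[OF a(1,2)] yz(1)], rule less.IH[OF lt[OF a(3,4)] yz(2)])
    hence "X \<subseteq> \<Union>{j\<in>JI S. j \<subseteq> X}" using yz(3) by blast
    thus ?thesis by blast
  qed
qed

lemma is_inf_unique: "is_inf S x y m \<Longrightarrow> is_inf S x y m' \<Longrightarrow> m = m'"
  unfolding is_inf_def by (meson subset_antisym)

lemma is_inf_ex:
  assumes u: "uclosed S" and f: "finite S" and "x\<in>S" "y\<in>S"
  shows "is_inf S x y (\<Union>{z\<in>S. z \<subseteq> x \<and> z \<subseteq> y})"
proof -
  have "\<Union>{z\<in>S. z \<subseteq> x \<and> z \<subseteq> y} \<in> S"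
    by (rule uclosed_Union[OF u]) (use f in auto)
  thus ?thesis unfolding is_inf_def by blast
qed

lemma infS_eq:
  assumes u: "uclosed S" and f: "finite S" and "x\<in>S" "y\<in>S"
  shows "infS S x y = \<Union>{z\<in>S. z \<subseteq> x \<and> z \<subseteq> y}"
proof -
  have "is_inf S x y (\<Union>{z\<in>S. z \<subseteq> x \<and> z \<subseteq> y})" by (rule is_inf_ex[OF assms])
  note h = this
  show ?thesis unfolding infS_def by (rule the_equality[where P="is_inf S x y", OF h]) (rule is_inf_unique[OF _ h])
qed


lemma dist_iff_prime:
  assumes u: "uclosed S" and f: "finite S"
  shows "distributive_lattice S \<longleftrightarrow> (\<forall>j\<in>JI S. prime_in S j)"
proof
  assume d: "distributive_lattice S"
  show "\<forall>j\<in>JI S. prime_in S j"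
  proof (intro ballI, unfold prime_in_def, intro ballI impI)
    fix j A B assume j: "j \<in> JI S" and AB: "A \<in> S" "B \<in> S" "j \<subseteq> A \<union> B"
    have jS: "j \<in> S" using JI_D[OF u j] by auto
    have ABS: "A \<union> B \<in> S" using u AB unfolding uclosed_def by auto
    have "infS S j (supS S A B) = supS S (infS S j A) (infS S j B)"
      using d jS AB unfolding distributive_lattice_def by blast
    moreover have "infS S j (supS S A B) = j"
      using infS_eq[OF u f jS ABS] supS_union[OF u AB(1,2)] AB(3) jS by auto
    moreover have iA: "infS S j A \<in> S" "infS S j B \<in> S"
      using infS_eq[OF u f jS AB(1)] infS_eq[OF u f jS AB(2)] uclosed_Union[OF u] f
      by (auto intro!: uclosed_Union[OF u] finite_subset[OF _ f])
    ultimately have "j = infS S j A \<union> infS S j B" using supS_union[OF u] by auto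
    hence "j = infS S j A \<or> j = infS S j B" using JI_D(3)[OF u j iA] by auto
    thus "j \<subseteq> A \<or> j \<subseteq> B"
      using infS_eq[OF u f jS AB(1)] infS_eq[OF u f jS AB(2)] by auto
  qed
next
  assume p: "\<forall>j\<in>JI S. prime_in S j"
  show "distributive_lattice S"
    unfolding distributive_lattice_def
  proof (intro conjI ballI)
    fix x y assume xy: "x \<in> S" "y \<in> S"
    show "\<exists>m. is_sup S x y m"
      using xy u unfolding is_sup_def uclosed_def by blast
    show "\<exists>m. is_inf S x y m"
      using is_inf_ex[OF u f xy] by blast
  next
    fix x y z assume xyz: "x \<in> S" "y \<in> S" "z \<in> S"
    have yz: "y \<union> z \<in> S" using u xyz unfolding uclosed_def by auto
    have fin: "finite {w\<in>S. w \<subseteq> x \<and> w \<subseteq> q}" for q using f by auto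
    have i1: "infS S x y \<in> S" "infS S x z \<in> S"
      using infS_eq[OF u f xyz(1,2)] infS_eq[OF u f xyz(1,3)] uclosed_Union[OF u fin] by auto
    have "\<Union>{w\<in>S. w \<subseteq> x \<and> w \<subseteq> y \<union> z} = \<Union>{w\<in>S. w \<subseteq> x \<and> w \<subseteq> y} \<union> \<Union>{w\<in>S. w \<subseteq> x \<and> w \<subseteq> z}"
    proof
      show "\<Union>{w\<in>S. w \<subseteq> x \<and> w \<subseteq> y \<union> z} \<subseteq> \<Union>{w\<in>S. w \<subseteq> x \<and> w \<subseteq> y} \<union> \<Union>{w\<in>S. w \<subseteq> x \<and> w \<subseteq> z}"
      proof
        fix e assume "e \<in> \<Union>{w\<in>S. w \<subseteq> x \<and> w \<subseteq> y \<union> z}"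
        then obtain w where w: "w \<in> S" "w \<subseteq> x" "w \<subseteq> y \<union> z" "e \<in> w" by auto
        have "e \<in> \<Union>{j\<in>JI S. j \<subseteq> w}" using w(4) decomp[OF u f w(1)] by metis
        then obtain j where j: "j \<in> JI S" "j \<subseteq> w" "e \<in> j" by blast
        have jS: "j \<in> S" using JI_D[OF u j(1)] by auto
        have "j \<subseteq> y \<or> j \<subseteq> z" using p j(1) xyz(2,3) j(2) w(3) unfolding prime_in_def by blast
        thus "e \<in> \<Union>{w\<in>S. w \<subseteq> x \<and> w \<subseteq> y} \<union> \<Union>{w\<in>S. w \<subseteq> x \<and> w \<subseteq> z}"
          using jS j w by blast
      qed
    qed blast
    thus "infS S x (supS S y z) = supS S (infS S x y) (infS S x z)"
      using infS_eq[OF u f xyz(1) yz] infS_eq[OF u f xyz(1,2)] infS_eq[OF u f xyz(1,3)]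
        supS_union[OF u xyz(2,3)] supS_union[OF u i1] by simp
  qed
qed




lemma regular_lists: "regular \<Sigma> L \<Longrightarrow> L \<subseteq> lists \<Sigma>"
  unfolding regular_def by auto

lemma foldl_in: "\<forall>q\<in>Q. \<forall>a\<in>\<Sigma>. \<delta> q a \<in> Q \<Longrightarrow> q \<in> Q \<Longrightarrow> w \<in> lists \<Sigma> \<Longrightarrow> foldl \<delta> q w \<in> Q"
  by (induction w arbitrary: q) auto

definition derivs :: "'a set \<Rightarrow> 'a list set \<Rightarrow> 'a list set set" where
 "derivs \<Sigma> M = {lderiv u M | u. u \<in> lists \<Sigma>}"

lemma in_revL: "x \<in> revL K \<longleftrightarrow> rev x \<in> K"
  unfolding revL_def by (metis image_iff rev_rev_ident)

lemma finite_derivs: assumes "regular \<Sigma> L" shows "finite (derivs \<Sigma> L)"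
proof -
  obtain Q :: "nat set" and q0 \<delta> F where A: "finite Q" "q0\<in>Q" "\<forall>q\<in>Q. \<forall>a\<in>\<Sigma>. \<delta> q a \<in> Q" "F \<subseteq> Q"
      "L = {w \<in> lists \<Sigma>. foldl \<delta> q0 w \<in> F}"
    using assms unfolding regular_def by blast
  have "derivs \<Sigma> L \<subseteq> (\<lambda>q. {w \<in> lists \<Sigma>. foldl \<delta> q w \<in> F}) ` Q"
  proof
    fix X assume "X \<in> derivs \<Sigma> L"
    then obtain u where u: "u \<in> lists \<Sigma>" "X = lderiv u L" unfolding derivs_def by blast
    have "X = {w \<in> lists \<Sigma>. foldl \<delta> (foldl \<delta> q0 u) w \<in> F}"
      using u A(5) unfolding lderiv_def by auto
    moreover have "foldl \<delta> q0 u \<in> Q" using foldl_in[OF A(3) A(2) u(1)] .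
    ultimately show "X \<in> (\<lambda>q. {w \<in> lists \<Sigma>. foldl \<delta> q w \<in> F}) ` Q" by blast
  qed
  thus ?thesis by (rule finite_subset) (use A(1) in auto)
qed

lemma finite_derivs_rev: assumes "regular \<Sigma> L" shows "finite (derivs \<Sigma> (revL L))"
proof -
  obtain Q :: "nat set" and q0 \<delta> F where A: "finite Q" "q0\<in>Q" "\<forall>q\<in>Q. \<forall>a\<in>\<Sigma>. \<delta> q a \<in> Q" "F \<subseteq> Q"
      "L = {w \<in> lists \<Sigma>. foldl \<delta> q0 w \<in> F}"
    using assms unfolding regular_def by blast
  have "derivs \<Sigma> (revL L) \<subseteq> (\<lambda>P. {w \<in> lists \<Sigma>. foldl \<delta> q0 (rev w) \<in> P}) ` Pow Q"
  proof
    fix X assume "X \<in> derivs \<Sigma> (revL L)"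
    then obtain u where u: "u \<in> lists \<Sigma>" "X = lderiv u (revL L)" unfolding derivs_def by blast
    define P where "P = {q\<in>Q. foldl \<delta> q (rev u) \<in> F}"
    have "X = {w \<in> lists \<Sigma>. foldl \<delta> q0 (rev w) \<in> P}"
    proof -
      have "w \<in> X \<longleftrightarrow> w \<in> lists \<Sigma> \<and> foldl \<delta> q0 (rev w) \<in> P" for w
      proof -
        have "w \<in> X \<longleftrightarrow> rev w @ rev u \<in> L" using u unfolding lderiv_def in_revL by simp
        also have "\<dots> \<longleftrightarrow> w \<in> lists \<Sigma> \<and> foldl \<delta> (foldl \<delta> q0 (rev w)) (rev u) \<in> F"
          using A(5) u(1) by auto
        also have "\<dots> \<longleftrightarrow> w \<in> lists \<Sigma> \<and> foldl \<delta> q0 (rev w) \<in> P"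
          unfolding P_def using foldl_in[OF A(3) A(2), of "rev w"] by (auto simp: in_lists_conv_set)
        finally show ?thesis .
      qed
      thus ?thesis by blast
    qed
    moreover have "P \<in> Pow Q" unfolding P_def by auto
    ultimately show "X \<in> (\<lambda>P. {w \<in> lists \<Sigma>. foldl \<delta> q0 (rev w) \<in> P}) ` Pow Q" by blast
  qed
  thus ?thesis by (rule finite_subset) (use A(1) in auto)
qed

lemma LQ_alt: "LQ \<Sigma> M = {\<Union>S | S. finite S \<and> S \<subseteq> derivs \<Sigma> M}"
  unfolding LQ_def derivs_def by simp

lemma uclosed_LQ: "uclosed (LQ \<Sigma> M)"
  unfolding uclosed_def LQ_alt
proof (intro conjI ballI)
  show "{} \<in> {\<Union>S | S. finite S \<and> S \<subseteq> derivs \<Sigma> M}" by (rule CollectI, rule exI[of _ "{}"]) auto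
  fix x y assume "x \<in> {\<Union>S | S. finite S \<and> S \<subseteq> derivs \<Sigma> M}" "y \<in> {\<Union>S | S. finite S \<and> S \<subseteq> derivs \<Sigma> M}"
  then obtain S1 S2 where "finite S1" "S1 \<subseteq> derivs \<Sigma> M" "x = \<Union>S1" "finite S2" "S2 \<subseteq> derivs \<Sigma> M" "y = \<Union>S2"
    by blast
  thus "x \<union> y \<in> {\<Union>S | S. finite S \<and> S \<subseteq> derivs \<Sigma> M}"
    by (intro CollectI exI[of _ "S1 \<union> S2"]) auto
qed

lemma finite_LQ: "finite (derivs \<Sigma> M) \<Longrightarrow> finite (LQ \<Sigma> M)"
proof -
  assume f: "finite (derivs \<Sigma> M)"
  have "LQ \<Sigma> M \<subseteq> Union ` Pow (derivs \<Sigma> M)" unfolding LQ_alt by blast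
  thus ?thesis using f by (meson finite_Pow_iff finite_imageI finite_subset)
qed

lemma lderiv_lists: "M \<subseteq> lists \<Sigma> \<Longrightarrow> lderiv u M \<subseteq> lists \<Sigma>"
  unfolding lderiv_def by auto

lemma LQ_cases: "X \<in> LQ \<Sigma> M \<Longrightarrow> \<exists>S. finite S \<and> S \<subseteq> derivs \<Sigma> M \<and> X = \<Union>S"
  unfolding LQ_alt by blast

lemma LQ_lists: "M \<subseteq> lists \<Sigma> \<Longrightarrow> X \<in> LQ \<Sigma> M \<Longrightarrow> X \<subseteq> lists \<Sigma>"
  unfolding LQ_alt derivs_def using lderiv_lists by blast

lemma deriv_in_LQ: "u \<in> lists \<Sigma> \<Longrightarrow> lderiv u M \<in> LQ \<Sigma> M"
  unfolding LQ_alt derivs_def by (intro CollectI exI[of _ "{lderiv u M}"]) auto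

lemma lderiv_Nil[simp]: "lderiv [] M = M"
  unfolding lderiv_def by simp

lemma M_in_LQ: "M \<in> LQ \<Sigma> M"
  using deriv_in_LQ[of "[]" \<Sigma> M] by simp

lemma LQ_elem: "X \<in> LQ \<Sigma> M \<Longrightarrow> w \<in> X \<Longrightarrow> \<exists>u\<in>lists \<Sigma>. w \<in> lderiv u M \<and> lderiv u M \<subseteq> X"
  unfolding LQ_alt derivs_def by blast

lemma lderiv_append: "lderiv v (lderiv u M) = lderiv (u @ v) M"
  unfolding lderiv_def by auto

lemma lderiv_mono: "A \<subseteq> B \<Longrightarrow> lderiv u A \<subseteq> lderiv u B"
  unfolding lderiv_def by auto

lemma lderiv_Union: "lderiv u (\<Union>S) = \<Union>(lderiv u ` S)"
  unfolding lderiv_def by auto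

lemma lderiv_LQ: assumes "X \<in> LQ \<Sigma> M" "a \<in> \<Sigma>" shows "lderiv [a] X \<in> LQ \<Sigma> M"
proof -
  obtain S where S: "finite S" "S \<subseteq> derivs \<Sigma> M" "X = \<Union>S" using LQ_cases[OF assms(1)] by blast
  have "lderiv [a] ` S \<subseteq> derivs \<Sigma> M"
  proof
    fix Y assume "Y \<in> lderiv [a] ` S"
    then obtain u where "u \<in> lists \<Sigma>" "Y = lderiv [a] (lderiv u M)" using S(2) unfolding derivs_def by blast
    hence "Y = lderiv (u @ [a]) M" "u @ [a] \<in> lists \<Sigma>" using assms(2) by (auto simp: lderiv_append)
    thus "Y \<in> derivs \<Sigma> M" unfolding derivs_def by blast
  qed
  note img = this
  show ?thesis unfolding LQ_alt S(3) lderiv_Union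
    by (intro CollectI exI[of _ "lderiv [a] ` S"]) (use S(1) img in auto)
qed

lemma JI_ne: "X \<in> JI (LQ \<Sigma> M) \<Longrightarrow> X \<noteq> {}"
  by (rule JI_D(2)[OF uclosed_LQ])

lemma JI_LQ: "X \<in> JI (LQ \<Sigma> M) \<Longrightarrow> X \<in> LQ \<Sigma> M"
  by (rule JI_D(1)[OF uclosed_LQ])

lemma JI_deriv: assumes "X \<in> JI (LQ \<Sigma> M)" shows "\<exists>u\<in>lists \<Sigma>. X = lderiv u M"
proof -
  have XL: "X \<in> LQ \<Sigma> M" using assms by (rule JI_LQ)
  obtain S where S: "finite S" "S \<subseteq> derivs \<Sigma> M" "X = \<Union>S"
    using LQ_cases[OF XL] by blast
  have "S \<subseteq> LQ \<Sigma> M"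
  proof
    fix Y assume "Y \<in> S"
    hence "Y \<in> derivs \<Sigma> M" using S(2) by blast
    then obtain u where "u \<in> lists \<Sigma>" "Y = lderiv u M" unfolding derivs_def by blast
    thus "Y \<in> LQ \<Sigma> M" by (simp add: deriv_in_LQ)
  qed
  hence "X \<in> S" by (rule JI_in_union[OF uclosed_LQ assms S(1) _ S(3)])
  hence "X \<in> derivs \<Sigma> M" using S(2) by blast
  thus ?thesis unfolding derivs_def by blast
qed




fun path :: "('s \<times> 'a \<times> 's) set \<Rightarrow> 's \<Rightarrow> 'a list \<Rightarrow> 's \<Rightarrow> bool" where
  "path T p [] q = (p = q)"
| "path T p (a#w) q = (\<exists>r. (p,a,r) \<in> T \<and> path T r w q)"

lemma path_append: "path T p (u@w) q \<longleftrightarrow> (\<exists>r. path T p u r \<and> path T r w q)"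
  by (induction u arbitrary: p) auto

lemma path_snoc: "path T p (u@[a]) q \<longleftrightarrow> (\<exists>r. path T p u r \<and> (r,a,q) \<in> T)"
  by (simp add: path_append)

lemma path_rev: "path {(q,a,p). (p,a,q) \<in> T} p w q \<longleftrightarrow> path T q (rev w) p"
  by (induction w arbitrary: p) (auto simp: path_snoc)

lemma TT_iff: "(X,a,Y) \<in> trans (canonical_RFSA \<Sigma> M) \<longleftrightarrow>
   X \<in> JI (LQ \<Sigma> M) \<and> Y \<in> JI (LQ \<Sigma> M) \<and> a \<in> \<Sigma> \<and> Y \<subseteq> lderiv [a] X"
  by (simp add: canonical_RFSA_def)

lemma path_J: "path (trans (canonical_RFSA \<Sigma> M)) p w q \<Longrightarrow> p \<in> JI (LQ \<Sigma> M) \<Longrightarrow> q \<in> JI (LQ \<Sigma> M)"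
  by (induction w arbitrary: p) (auto simp: TT_iff)

lemma path_mono: "path (trans (canonical_RFSA \<Sigma> M)) p w q \<Longrightarrow> q \<subseteq> lderiv w p"
proof (induction w arbitrary: p)
  case Nil thus ?case by simp
next
  case (Cons a w)
  then obtain r where r: "(p,a,r) \<in> trans (canonical_RFSA \<Sigma> M)" "path (trans (canonical_RFSA \<Sigma> M)) r w q" by auto
  have "q \<subseteq> lderiv w r" using Cons.IH[OF r(2)] .
  also have "\<dots> \<subseteq> lderiv w (lderiv [a] p)" using r(1) by (intro lderiv_mono) (simp add: TT_iff)
  also have "\<dots> = lderiv (a#w) p" by (simp add: lderiv_append)
  finally show ?case .
qed

lemma future:
  assumes HM: "M \<subseteq> lists \<Sigma>" and fin: "finite (LQ \<Sigma> M)"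
  shows "X \<in> JI (LQ \<Sigma> M) \<Longrightarrow> w \<in> X \<longleftrightarrow> (\<exists>q. [] \<in> q \<and> q \<in> JI (LQ \<Sigma> M) \<and> path (trans (canonical_RFSA \<Sigma> M)) X w q)"
proof (induction w arbitrary: X)
  case Nil thus ?case by auto
next
  case (Cons a w)
  have XL: "X \<in> LQ \<Sigma> M" using Cons.prems by (rule JI_LQ)
  show ?case
  proof
    assume aw: "a # w \<in> X"
    have "a \<in> \<Sigma>" using LQ_lists[OF HM XL] aw by auto
    hence ZL: "lderiv [a] X \<in> LQ \<Sigma> M" using lderiv_LQ[OF XL] by blast
    have "w \<in> lderiv [a] X" using aw unfolding lderiv_def by simp
    hence "w \<in> \<Union>{j\<in>JI (LQ \<Sigma> M). j \<subseteq> lderiv [a] X}" using decomp[OF uclosed_LQ fin ZL] by metis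
    then obtain Y where Y: "Y \<in> JI (LQ \<Sigma> M)" "Y \<subseteq> lderiv [a] X" "w \<in> Y" by blast
    obtain q where q: "[] \<in> q" "q \<in> JI (LQ \<Sigma> M)" "path (trans (canonical_RFSA \<Sigma> M)) Y w q"
      using Cons.IH[OF Y(1)] Y(3) by blast
    have "(X,a,Y) \<in> trans (canonical_RFSA \<Sigma> M)" using Y Cons.prems \<open>a \<in> \<Sigma>\<close> by (simp add: TT_iff)
    thus "\<exists>q. [] \<in> q \<and> q \<in> JI (LQ \<Sigma> M) \<and> path (trans (canonical_RFSA \<Sigma> M)) X (a # w) q"
      using q by auto
  next
    assume "\<exists>q. [] \<in> q \<and> q \<in> JI (LQ \<Sigma> M) \<and> path (trans (canonical_RFSA \<Sigma> M)) X (a # w) q"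
    then obtain q Y where q: "[] \<in> q" "q \<in> JI (LQ \<Sigma> M)" "(X,a,Y) \<in> trans (canonical_RFSA \<Sigma> M)"
      "path (trans (canonical_RFSA \<Sigma> M)) Y w q" by auto
    have Y: "Y \<in> JI (LQ \<Sigma> M)" "Y \<subseteq> lderiv [a] X" using q(3) by (auto simp: TT_iff)
    have "w \<in> Y" using Cons.IH[OF Y(1)] q by blast
    thus "a # w \<in> X" using Y(2) unfolding lderiv_def by auto
  qed
qed

lemma past_cover:
  assumes HM: "M \<subseteq> lists \<Sigma>" and fin: "finite (LQ \<Sigma> M)" and w: "w \<in> lderiv u M"
  shows "\<exists>X\<in>JI (LQ \<Sigma> M). (\<exists>p\<in>JI (LQ \<Sigma> M). p \<subseteq> M \<and> path (trans (canonical_RFSA \<Sigma> M)) p u X) \<and> w \<in> X"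
proof -
  have "u @ w \<in> M" using w unfolding lderiv_def by simp
  hence "u @ w \<in> \<Union>{j\<in>JI (LQ \<Sigma> M). j \<subseteq> M}" using decomp[OF uclosed_LQ fin M_in_LQ] by metis
  then obtain p where p: "p \<in> JI (LQ \<Sigma> M)" "p \<subseteq> M" "u @ w \<in> p" by blast
  obtain q where q: "[] \<in> q" "q \<in> JI (LQ \<Sigma> M)" "path (trans (canonical_RFSA \<Sigma> M)) p (u @ w) q"
    using future[OF HM fin p(1)] p(3) by blast
  obtain X where X: "path (trans (canonical_RFSA \<Sigma> M)) p u X" "path (trans (canonical_RFSA \<Sigma> M)) X w q"
    using q(3) path_append by metis
  have XJ: "X \<in> JI (LQ \<Sigma> M)" using path_J[OF X(1) p(1)] .
  have "w \<in> X" using future[OF HM fin XJ] q(1,2) X(2) by blast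
  thus ?thesis using XJ p X(1) by blast
qed

lemma iso_path:
  assumes iso: "nfa_iso f N N'"
    and T1: "trans N \<subseteq> states N \<times> UNIV \<times> states N"
    and T2: "trans N' \<subseteq> states N' \<times> UNIV \<times> states N'"
  shows "p \<in> states N \<Longrightarrow> q \<in> states N \<Longrightarrow> path (trans N) p w q \<longleftrightarrow> path (trans N') (f p) w (f q)"
proof (induction w arbitrary: p)
  case Nil
  have "inj_on f (states N)" using iso unfolding nfa_iso_def bij_betw_def by blast
  thus ?case using Nil by (auto dest: inj_onD)
next
  case (Cons a w)
  have tr: "\<And>p q. p \<in> states N \<Longrightarrow> q \<in> states N \<Longrightarrow> (p, a, q) \<in> trans N \<longleftrightarrow> (f p, a, f q) \<in> trans N'"
    using iso unfolding nfa_iso_def by blast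
  have im: "f ` states N = states N'" using iso unfolding nfa_iso_def bij_betw_def by blast
  show ?case
  proof
    assume "path (trans N) p (a # w) q"
    then obtain r where r: "(p,a,r) \<in> trans N" "path (trans N) r w q" by auto
    have rs: "r \<in> states N" using r(1) T1 by blast
    have "(f p, a, f r) \<in> trans N'" using tr[OF Cons.prems(1) rs] r(1) by blast
    moreover have "path (trans N') (f r) w (f q)" using Cons.IH[OF rs Cons.prems(2)] r(2) by blast
    ultimately show "path (trans N') (f p) (a # w) (f q)" by auto
  next
    assume "path (trans N') (f p) (a # w) (f q)"
    then obtain r' where r: "(f p,a,r') \<in> trans N'" "path (trans N') r' w (f q)" by auto
    have "r' \<in> states N'" using r(1) T2 by blast
    then obtain r where rs: "r \<in> states N" and rr: "r' = f r" using im by blast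
    have "(p, a, r) \<in> trans N" using tr[OF Cons.prems(1) rs] r(1) rr by blast
    moreover have "path (trans N) r w q" using Cons.IH[OF rs Cons.prems(2)] r(2) rr by blast
    ultimately show "path (trans N) p (a # w) q" by auto
  qed
qed

lemma canon_states: "states (canonical_RFSA \<Sigma> M) = JI (LQ \<Sigma> M)"
  by (simp add: canonical_RFSA_def)
lemma canon_init: "init (canonical_RFSA \<Sigma> M) = {X \<in> JI (LQ \<Sigma> M). X \<subseteq> M}"
  by (simp add: canonical_RFSA_def)
lemma canon_final: "final (canonical_RFSA \<Sigma> M) = {X \<in> JI (LQ \<Sigma> M). [] \<in> X}"
  by (simp add: canonical_RFSA_def)
lemma canon_trans_sub: "trans (canonical_RFSA \<Sigma> M) \<subseteq> states (canonical_RFSA \<Sigma> M) \<times> UNIV \<times> states (canonical_RFSA \<Sigma> M)"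
  by (auto simp: canonical_RFSA_def)
lemma rev_simps: "states (nfa_rev N) = states N" "trans (nfa_rev N) = {(q, a, p). (p, a, q) \<in> trans N}"
  "init (nfa_rev N) = final N" "final (nfa_rev N) = init N"
  by (simp_all add: nfa_rev_def)
lemma rev_trans_sub: "trans N \<subseteq> states N \<times> UNIV \<times> states N \<Longrightarrow> trans (nfa_rev N) \<subseteq> states (nfa_rev N) \<times> UNIV \<times> states (nfa_rev N)"
  by (auto simp: rev_simps)




lemma rev_lists: "rev w \<in> lists \<Sigma> \<longleftrightarrow> w \<in> lists \<Sigma>"
  by (auto simp: in_lists_conv_set)

lemma revL_lists: "L \<subseteq> lists \<Sigma> \<Longrightarrow> revL L \<subseteq> lists \<Sigma>"
  unfolding revL_def by (auto simp: in_lists_conv_set)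

lemma biRFSA_prime:
  assumes HL: "L \<subseteq> lists \<Sigma>" and finL: "finite (LQ \<Sigma> L)" and finR: "finite (LQ \<Sigma> (revL L))"
    and iso: "nfa_iso f (canonical_RFSA \<Sigma> L) (nfa_rev (canonical_RFSA \<Sigma> (revL L)))"
    and X: "X \<in> JI (LQ \<Sigma> L)"
  shows "prime_in (LQ \<Sigma> L) X"
proof -
  define J where "J = JI (LQ \<Sigma> L)"
  define J' where "J' = JI (LQ \<Sigma> (revL L))"
  define T where "T = trans (canonical_RFSA \<Sigma> L)"
  define T' where "T' = trans (canonical_RFSA \<Sigma> (revL L))"
  have HR: "revL L \<subseteq> lists \<Sigma>" using HL by (rule revL_lists)
  have bij: "bij_betw f J J'" using iso unfolding nfa_iso_def J_def J'_def by (simp add: canon_states rev_simps)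
  hence fJ: "\<And>p. p \<in> J \<Longrightarrow> f p \<in> J'" and surj: "\<And>q. q \<in> J' \<Longrightarrow> \<exists>p\<in>J. q = f p"
    unfolding bij_betw_def by auto
  have ftr: "path T p w q \<longleftrightarrow> path T' (f q) (rev w) (f p)" if "p \<in> J" "q \<in> J" for p q w
  proof -
    have "path T p w q \<longleftrightarrow> path (trans (nfa_rev (canonical_RFSA \<Sigma> (revL L)))) (f p) w (f q)"
      unfolding T_def
      by (rule iso_path[OF iso canon_trans_sub rev_trans_sub[OF canon_trans_sub]])
        (use that in \<open>simp_all add: J_def canon_states\<close>)
    also have "\<dots> \<longleftrightarrow> path T' (f q) (rev w) (f p)" unfolding rev_simps T'_def by (rule path_rev)
    finally show ?thesis .
  qed
  have finit: "p \<subseteq> L \<longleftrightarrow> [] \<in> f p" if "p \<in> J" for p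
  proof -
    have "p \<in> init (canonical_RFSA \<Sigma> L) \<longleftrightarrow> f p \<in> init (nfa_rev (canonical_RFSA \<Sigma> (revL L)))"
      using iso that unfolding nfa_iso_def J_def canon_states by blast
    thus ?thesis using that fJ[OF that] by (simp add: rev_simps canon_init canon_final J_def J'_def)
  qed
  have ffin: "[] \<in> p \<longleftrightarrow> f p \<subseteq> revL L" if "p \<in> J" for p
  proof -
    have "p \<in> final (canonical_RFSA \<Sigma> L) \<longleftrightarrow> f p \<in> final (nfa_rev (canonical_RFSA \<Sigma> (revL L)))"
      using iso that unfolding nfa_iso_def J_def canon_states by blast
    thus ?thesis using that fJ[OF that] by (simp add: rev_simps canon_init canon_final J_def J'_def)
  qed
  have star: "(\<exists>p\<in>J. p \<subseteq> L \<and> path T p u Y) \<longleftrightarrow> rev u \<in> f Y" if Y: "Y \<in> J" for Y u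
  proof
    assume "\<exists>p\<in>J. p \<subseteq> L \<and> path T p u Y"
    then obtain p where p: "p \<in> J" "p \<subseteq> L" "path T p u Y" by blast
    have "path T' (f Y) (rev u) (f p)" using ftr[OF p(1) Y] p(3) by simp
    moreover have "[] \<in> f p" using finit[OF p(1)] p(2) by simp
    ultimately show "rev u \<in> f Y" using future[OF HR finR, of "f Y" "rev u"] fJ[OF Y] fJ[OF p(1)]
      unfolding J'_def T'_def by blast
  next
    assume "rev u \<in> f Y"
    then obtain q where q: "[] \<in> q" "q \<in> J'" "path T' (f Y) (rev u) q"
      using future[OF HR finR, of "f Y" "rev u"] fJ[OF Y] unfolding J'_def T'_def by blast
    obtain p where p: "p \<in> J" "q = f p" using surj[OF q(2)] by blast
    have "path T p u Y" using ftr[OF p(1) Y] q(3) p(2) by simp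
    moreover have "p \<subseteq> L" using finit[OF p(1)] q(1) p(2) by simp
    ultimately show "\<exists>p\<in>J. p \<subseteq> L \<and> path T p u Y" using p(1) by blast
  qed
  have star2: "(\<exists>p'\<in>J'. p' \<subseteq> revL L \<and> path T' p' y (f Y)) \<longleftrightarrow> rev y \<in> Y" if Y: "Y \<in> J" for Y y
  proof
    assume "\<exists>p'\<in>J'. p' \<subseteq> revL L \<and> path T' p' y (f Y)"
    then obtain p' where p': "p' \<in> J'" "p' \<subseteq> revL L" "path T' p' y (f Y)" by blast
    obtain p where p: "p \<in> J" "p' = f p" using surj[OF p'(1)] by blast
    have "path T Y (rev y) p" using ftr[OF Y p(1)] p'(3) p(2) by simp
    moreover have "[] \<in> p" using ffin[OF p(1)] p'(2) p(2) by simp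
    ultimately show "rev y \<in> Y" using future[OF HL finL Y[unfolded J_def], of "rev y"] p(1)
      unfolding J_def T_def by blast
  next
    assume "rev y \<in> Y"
    then obtain q where q: "[] \<in> q" "q \<in> J" "path T Y (rev y) q"
      using future[OF HL finL Y[unfolded J_def], of "rev y"] unfolding J_def T_def by blast
    have "path T' (f q) y (f Y)" using ftr[OF Y q(2)] q(3) by simp
    moreover have "f q \<subseteq> revL L" using ffin[OF q(2)] q(1) by simp
    ultimately show "\<exists>p'\<in>J'. p' \<subseteq> revL L \<and> path T' p' y (f Y)" using fJ[OF q(2)] by blast
  qed
  have XJ: "X \<in> J" using X unfolding J_def .
  obtain y where y: "y \<in> lists \<Sigma>" "f X = lderiv y (revL L)"
    using JI_deriv[of "f X" \<Sigma> "revL L"] fJ[OF XJ] unfolding J'_def by blast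
  define Q where "Q = {Y\<in>J'. \<exists>p'\<in>J'. p' \<subseteq> revL L \<and> path T' p' y Y}"
  have fXQ: "f X = \<Union>Q"
  proof
    show "f X \<subseteq> \<Union>Q"
    proof
      fix w assume "w \<in> f X"
      hence "w \<in> lderiv y (revL L)" using y by simp
      thus "w \<in> \<Union>Q" using past_cover[OF HR finR] unfolding Q_def J'_def T'_def by blast
    qed
  next
    show "\<Union>Q \<subseteq> f X"
    proof
      fix w assume "w \<in> \<Union>Q"
      then obtain Y p' where "w \<in> Y" "p' \<subseteq> revL L" "path T' p' y Y" unfolding Q_def by blast
      hence "w \<in> lderiv y p'" using path_mono unfolding T'_def by blast
      hence "w \<in> lderiv y (revL L)" using lderiv_mono[OF \<open>p' \<subseteq> revL L\<close>] by blast
      thus "w \<in> f X" using y by simp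
    qed
  qed
  have QJ: "Q \<subseteq> LQ \<Sigma> (revL L)" unfolding Q_def J'_def using JI_LQ by blast
  have Qfin: "finite Q" using finite_subset[OF QJ finR] .
  have "f X \<in> Q" using JI_in_union[OF uclosed_LQ _ Qfin QJ fXQ] fJ[OF XJ] unfolding J'_def by blast
  hence "rev y \<in> X" using star2[OF XJ] unfolding Q_def by blast
  show ?thesis unfolding prime_in_def
  proof (intro ballI impI)
    fix A B assume AB: "A \<in> LQ \<Sigma> L" "B \<in> LQ \<Sigma> L" "X \<subseteq> A \<union> B"
    have gen: "X \<subseteq> C" if C: "C \<in> LQ \<Sigma> L" "rev y \<in> C" for C
    proof -
      obtain u where u: "u \<in> lists \<Sigma>" "rev y \<in> lderiv u L" "lderiv u L \<subseteq> C"
        using LQ_elem[OF C] by blast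
      have "u @ rev y \<in> L" using u(2) unfolding lderiv_def by simp
      hence "rev u \<in> f X" using y(2) unfolding lderiv_def in_revL by simp
      then obtain p where p: "p \<in> J" "p \<subseteq> L" "path T p u X" using star[OF XJ] by blast
      have "X \<subseteq> lderiv u p" using path_mono p(3) unfolding T_def by blast
      also have "\<dots> \<subseteq> lderiv u L" using p(2) by (rule lderiv_mono)
      finally show ?thesis using u(3) by blast
    qed
    show "X \<subseteq> A \<or> X \<subseteq> B"
      using gen[OF AB(1)] gen[OF AB(2)] AB(3) \<open>rev y \<in> X\<close> by blast
  qed
qed




lemma prime_finite_union:
  assumes u: "uclosed S" and j: "j \<in> JI S" and p: "prime_in S j"
  shows "finite T \<Longrightarrow> T \<subseteq> S \<Longrightarrow> j \<subseteq> \<Union>T \<Longrightarrow> \<exists>t\<in>T. j \<subseteq> t"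
proof (induction T rule: finite_induct)
  case empty thus ?case using JI_D(2)[OF u j] by auto
next
  case (insert t T)
  have "\<Union>T \<in> S" using uclosed_Union[OF u insert(1)] insert(4) by auto
  moreover have "t \<in> S" using insert(4) by auto
  ultimately have "j \<subseteq> t \<or> j \<subseteq> \<Union>T" using p insert(5) unfolding prime_in_def by auto
  thus ?case using insert by auto
qed

context
  fixes \<Sigma> :: "'a set" and L :: "'a list set"
  assumes HL: "L \<subseteq> lists \<Sigma>" and finD: "finite (derivs \<Sigma> L)"
    and finR: "finite (LQ \<Sigma> (revL L))"
    and P: "\<forall>j\<in>JI (LQ \<Sigma> L). prime_in (LQ \<Sigma> L) j"
begin

lemma finL: "finite (LQ \<Sigma> L)" using finD by (rule finite_LQ)

lemma key: assumes j: "j \<in> JI (LQ \<Sigma> L)"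
  shows "\<exists>v0\<in>j. \<forall>u\<in>lists \<Sigma>. u @ v0 \<in> L \<longrightarrow> j \<subseteq> lderiv u L"
proof (rule ccontr)
  assume "\<not> ?thesis"
  hence H: "\<forall>v\<in>j. \<exists>u\<in>lists \<Sigma>. u @ v \<in> L \<and> \<not> j \<subseteq> lderiv u L" by blast
  define T where "T = {D \<in> derivs \<Sigma> L. \<not> j \<subseteq> D}"
  have Tfin: "finite T" using finD unfolding T_def by auto
  have TS: "T \<subseteq> LQ \<Sigma> L"
  proof
    fix D assume "D \<in> T"
    then obtain u where "u \<in> lists \<Sigma>" "D = lderiv u L" unfolding T_def derivs_def by blast
    thus "D \<in> LQ \<Sigma> L" by (simp add: deriv_in_LQ)
  qed
  have "j \<subseteq> \<Union>T"
  proof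
    fix v assume "v \<in> j"
    then obtain u where u: "u \<in> lists \<Sigma>" "u @ v \<in> L" "\<not> j \<subseteq> lderiv u L" using H by blast
    have "lderiv u L \<in> T" unfolding T_def derivs_def using u by blast
    moreover have "v \<in> lderiv u L" using u(2) unfolding lderiv_def by simp
    ultimately show "v \<in> \<Union>T" by blast
  qed
  then obtain t where "t \<in> T" "j \<subseteq> t"
    using prime_finite_union[OF uclosed_LQ j _ Tfin TS] P j by blast
  thus False unfolding T_def by blast
qed

definition col :: "'a list \<Rightarrow> 'a list set" where "col v = {u. u @ v \<in> L}"

lemma dr_recover: assumes K: "K \<in> LQ \<Sigma> (revL L)"
  shows "revL K = \<Union>{col v | v. v \<in> lists \<Sigma> \<and> v \<notin> dr \<Sigma> L K}"
proof
  show "revL K \<subseteq> \<Union>{col v | v. v \<in> lists \<Sigma> \<and> v \<notin> dr \<Sigma> L K}"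
  proof
    fix u assume "u \<in> revL K"
    hence "rev u \<in> K" by (simp add: in_revL)
    then obtain y where y: "y \<in> lists \<Sigma>" "rev u \<in> lderiv y (revL L)" "lderiv y (revL L) \<subseteq> K"
      using LQ_elem[OF K] by blast
    have "u \<in> col (rev y)" using y(2) unfolding col_def lderiv_def in_revL by simp
    moreover have "rev y \<notin> dr \<Sigma> L K"
    proof
      assume "rev y \<in> dr \<Sigma> L K"
      then obtain u' where u': "u' \<in> lists \<Sigma>" "u' \<notin> revL K" "u' @ rev y \<in> L"
        unfolding dr_def lderivs_def compl_def lderiv_def by blast
      have "rev u' \<in> lderiv y (revL L)" using u'(3) unfolding lderiv_def in_revL by simp
      hence "u' \<in> revL K" using y(3) by (auto simp: in_revL)
      thus False using u'(2) by blast
    qed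
    moreover have "rev y \<in> lists \<Sigma>" using y(1) by (simp add: rev_lists)
    ultimately show "u \<in> \<Union>{col v | v. v \<in> lists \<Sigma> \<and> v \<notin> dr \<Sigma> L K}" by blast
  qed
next
  show "\<Union>{col v | v. v \<in> lists \<Sigma> \<and> v \<notin> dr \<Sigma> L K} \<subseteq> revL K"
  proof
    fix u assume "u \<in> \<Union>{col v | v. v \<in> lists \<Sigma> \<and> v \<notin> dr \<Sigma> L K}"
    then obtain v where v: "v \<in> lists \<Sigma>" "v \<notin> dr \<Sigma> L K" "u @ v \<in> L" unfolding col_def by blast
    have "u \<in> lists \<Sigma>" using v(3) HL by auto
    show "u \<in> revL K"
    proof (rule ccontr)
      assume "u \<notin> revL K"
      hence "v \<in> dr \<Sigma> L K" using v(3) \<open>u \<in> lists \<Sigma>\<close>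
        unfolding dr_def lderivs_def compl_def lderiv_def by blast
      thus False using v(2) by blast
    qed
  qed
qed

lemma dr_inj: "K1 \<in> LQ \<Sigma> (revL L) \<Longrightarrow> K2 \<in> LQ \<Sigma> (revL L) \<Longrightarrow> dr \<Sigma> L K1 = dr \<Sigma> L K2 \<Longrightarrow> K1 = K2"
proof -
  assume a: "K1 \<in> LQ \<Sigma> (revL L)" "K2 \<in> LQ \<Sigma> (revL L)" "dr \<Sigma> L K1 = dr \<Sigma> L K2"
  have "revL K1 = revL K2" using dr_recover[OF a(1)] dr_recover[OF a(2)] a(3) by simp
  thus "K1 = K2" by (metis in_revL rev_rev_ident subsetI subset_antisym)
qed

lemma theta_mem: assumes j: "j \<in> JI (LQ \<Sigma> L)"
  shows "\<exists>y\<in>lists \<Sigma>. theta \<Sigma> L j = lderiv y (revL L)"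
    "\<And>w. w \<in> theta \<Sigma> L j \<longleftrightarrow> j \<subseteq> lderiv (rev w) L"
proof -
  obtain v0 where v0: "v0 \<in> j" "\<forall>u\<in>lists \<Sigma>. u @ v0 \<in> L \<longrightarrow> j \<subseteq> lderiv u L"
    using key[OF j] by blast
  define K where "K = lderiv (rev v0) (revL L)"
  have jL: "j \<subseteq> lists \<Sigma>" using LQ_lists[OF HL JI_LQ[OF j]] .
  have y: "rev v0 \<in> lists \<Sigma>" using v0(1) jL by (auto simp: rev_lists)
  have Kc: "w \<in> K \<longleftrightarrow> rev w @ v0 \<in> L" for w unfolding K_def lderiv_def in_revL by simp
  have Kc2: "w \<in> K \<longleftrightarrow> j \<subseteq> lderiv (rev w) L" for w
  proof
    assume "w \<in> K"
    hence "rev w @ v0 \<in> L" using Kc by blast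
    moreover hence "rev w \<in> lists \<Sigma>" using HL by auto
    ultimately show "j \<subseteq> lderiv (rev w) L" using v0(2) by blast
  next
    assume "j \<subseteq> lderiv (rev w) L"
    thus "w \<in> K" using v0(1) Kc unfolding lderiv_def by blast
  qed
  have KL: "K \<in> LQ \<Sigma> (revL L)" unfolding K_def using y by (rule deriv_in_LQ)
  have "dr \<Sigma> L K = tau \<Sigma> L j"
  proof -
    have memK: "u \<in> revL K \<longleftrightarrow> j \<subseteq> lderiv u L" for u using Kc2[of "rev u"] by (simp add: in_revL)
    have "w \<in> dr \<Sigma> L K \<longleftrightarrow> (\<exists>u\<in>lists \<Sigma>. \<not> j \<subseteq> lderiv u L \<and> w \<in> lderiv u L)" for w
      unfolding dr_def lderivs_def compl_def using memK by blast
    moreover have "w \<in> tau \<Sigma> L j \<longleftrightarrow> (\<exists>u\<in>lists \<Sigma>. \<not> j \<subseteq> lderiv u L \<and> w \<in> lderiv u L)" for w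
    proof
      assume "w \<in> tau \<Sigma> L j"
      then obtain X where X: "X \<in> LQ \<Sigma> L" "\<not> j \<subseteq> X" "w \<in> X" unfolding tau_def by blast
      obtain u where u: "u \<in> lists \<Sigma>" "w \<in> lderiv u L" "lderiv u L \<subseteq> X" using LQ_elem[OF X(1,3)] by blast
      thus "\<exists>u\<in>lists \<Sigma>. \<not> j \<subseteq> lderiv u L \<and> w \<in> lderiv u L" using X(2) by blast
    next
      assume "\<exists>u\<in>lists \<Sigma>. \<not> j \<subseteq> lderiv u L \<and> w \<in> lderiv u L"
      then obtain u where u: "u \<in> lists \<Sigma>" "\<not> j \<subseteq> lderiv u L" "w \<in> lderiv u L" by blast
      have "lderiv u L \<in> LQ \<Sigma> L" using u(1) by (rule deriv_in_LQ)
      thus "w \<in> tau \<Sigma> L j" unfolding tau_def using u by blast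
    qed
    ultimately show ?thesis by blast
  qed
  hence th: "theta \<Sigma> L j = K" unfolding theta_def
    using KL dr_inj by (intro the_equality) auto
  show "\<exists>y\<in>lists \<Sigma>. theta \<Sigma> L j = lderiv y (revL L)" using th y unfolding K_def by blast
  show "\<And>w. w \<in> theta \<Sigma> L j \<longleftrightarrow> j \<subseteq> lderiv (rev w) L" using th Kc2 by simp
qed

lemma theta_J: assumes j: "j \<in> JI (LQ \<Sigma> L)" shows "theta \<Sigma> L j \<in> JI (LQ \<Sigma> (revL L))"
proof -
  obtain u0 where u0: "u0 \<in> lists \<Sigma>" "j = lderiv u0 L" using JI_deriv[OF j] by blast
  have tL: "theta \<Sigma> L j \<in> LQ \<Sigma> (revL L)" using theta_mem(1)[OF j] deriv_in_LQ by metis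
  have r0: "rev u0 \<in> theta \<Sigma> L j" using theta_mem(2)[OF j] u0(2) by simp
  show ?thesis unfolding JI_char[OF uclosed_LQ]
  proof (intro CollectI conjI ballI impI)
    show "theta \<Sigma> L j \<in> LQ \<Sigma> (revL L)" by (rule tL)
    show "theta \<Sigma> L j \<noteq> {}" using r0 by blast
    fix Y Z assume YZ: "Y \<in> LQ \<Sigma> (revL L)" "Z \<in> LQ \<Sigma> (revL L)" "theta \<Sigma> L j = Y \<union> Z"
    have gen: "theta \<Sigma> L j \<subseteq> C" if C: "C \<in> LQ \<Sigma> (revL L)" "rev u0 \<in> C" for C
    proof
      obtain y' where y': "y' \<in> lists \<Sigma>" "rev u0 \<in> lderiv y' (revL L)" "lderiv y' (revL L) \<subseteq> C"
        using LQ_elem[OF C] by blast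
      have "rev y' \<in> j" using y'(2) u0(2) unfolding lderiv_def in_revL by simp
      fix w assume "w \<in> theta \<Sigma> L j"
      hence "j \<subseteq> lderiv (rev w) L" using theta_mem(2)[OF j] by blast
      hence "rev w @ rev y' \<in> L" using \<open>rev y' \<in> j\<close> unfolding lderiv_def by blast
      hence "w \<in> lderiv y' (revL L)" unfolding lderiv_def in_revL by simp
      thus "w \<in> C" using y'(3) by blast
    qed
    have "rev u0 \<in> Y \<or> rev u0 \<in> Z" using r0 YZ(3) by blast
    thus "theta \<Sigma> L j = Y \<or> theta \<Sigma> L j = Z" using gen[OF YZ(1)] gen[OF YZ(2)] YZ(3) by blast
  qed
qed

lemma theta_inj: "inj_on (theta \<Sigma> L) (JI (LQ \<Sigma> L))"
proof (rule inj_onI)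
  fix p q assume pq: "p \<in> JI (LQ \<Sigma> L)" "q \<in> JI (LQ \<Sigma> L)" "theta \<Sigma> L p = theta \<Sigma> L q"
  have eq: "p \<subseteq> lderiv u L \<longleftrightarrow> q \<subseteq> lderiv u L" for u
    using theta_mem(2)[OF pq(1), of "rev u"] theta_mem(2)[OF pq(2), of "rev u"] pq(3) by simp
  obtain u1 where "p = lderiv u1 L" using JI_deriv[OF pq(1)] by blast
  obtain u2 where "q = lderiv u2 L" using JI_deriv[OF pq(2)] by blast
  show "p = q" using eq[of u1] eq[of u2] \<open>p = lderiv u1 L\<close> \<open>q = lderiv u2 L\<close> by blast
qed

lemma theta_surj: assumes Y: "Y \<in> JI (LQ \<Sigma> (revL L))" shows "\<exists>j\<in>JI (LQ \<Sigma> L). theta \<Sigma> L j = Y"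
proof -
  obtain y where y: "y \<in> lists \<Sigma>" "Y = lderiv y (revL L)" using JI_deriv[OF Y] by blast
  define Jv where "Jv = {j\<in>JI (LQ \<Sigma> L). rev y \<in> j}"
  have "Y = \<Union>(theta \<Sigma> L ` Jv)"
  proof
    show "Y \<subseteq> \<Union>(theta \<Sigma> L ` Jv)"
    proof
      fix w assume "w \<in> Y"
      hence w: "rev w @ rev y \<in> L" using y(2) unfolding lderiv_def in_revL by simp
      hence "rev w \<in> lists \<Sigma>" using HL by auto
      hence DL: "lderiv (rev w) L \<in> LQ \<Sigma> L" by (rule deriv_in_LQ)
      have "rev y \<in> lderiv (rev w) L" using w unfolding lderiv_def by simp
      hence "rev y \<in> \<Union>{j\<in>JI (LQ \<Sigma> L). j \<subseteq> lderiv (rev w) L}"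
        using decomp[OF uclosed_LQ finL DL] by metis
      then obtain j where j: "j \<in> JI (LQ \<Sigma> L)" "j \<subseteq> lderiv (rev w) L" "rev y \<in> j" by blast
      have "w \<in> theta \<Sigma> L j" using theta_mem(2)[OF j(1)] j(2) by blast
      thus "w \<in> \<Union>(theta \<Sigma> L ` Jv)" using j unfolding Jv_def by blast
    qed
  next
    show "\<Union>(theta \<Sigma> L ` Jv) \<subseteq> Y"
    proof
      fix w assume "w \<in> \<Union>(theta \<Sigma> L ` Jv)"
      then obtain j where j: "j \<in> JI (LQ \<Sigma> L)" "rev y \<in> j" "w \<in> theta \<Sigma> L j" unfolding Jv_def by blast
      have "j \<subseteq> lderiv (rev w) L" using theta_mem(2)[OF j(1)] j(3) by blast
      hence "rev w @ rev y \<in> L" using j(2) unfolding lderiv_def by blast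
      thus "w \<in> Y" using y(2) unfolding lderiv_def in_revL by simp
    qed
  qed
  moreover have "finite (theta \<Sigma> L ` Jv)"
  proof -
    have "Jv \<subseteq> LQ \<Sigma> L" unfolding Jv_def using JI_LQ by blast
    thus ?thesis using finite_subset finL by blast
  qed
  moreover have "theta \<Sigma> L ` Jv \<subseteq> LQ \<Sigma> (revL L)"
    using theta_J JI_LQ unfolding Jv_def by blast
  ultimately have "Y \<in> theta \<Sigma> L ` Jv" using JI_in_union[OF uclosed_LQ Y] by blast
  thus ?thesis unfolding Jv_def by blast
qed

lemma theta_iso: "nfa_iso (theta \<Sigma> L) (canonical_RFSA \<Sigma> L) (nfa_rev (canonical_RFSA \<Sigma> (revL L)))"
  unfolding nfa_iso_def rev_simps canon_states canon_init canon_final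
proof (intro conjI ballI allI)
  show "bij_betw (theta \<Sigma> L) (JI (LQ \<Sigma> L)) (JI (LQ \<Sigma> (revL L)))"
    unfolding bij_betw_def using theta_inj theta_J theta_surj by blast
next
  fix p q a assume pq: "p \<in> JI (LQ \<Sigma> L)" "q \<in> JI (LQ \<Sigma> L)"
  have tJ: "theta \<Sigma> L p \<in> JI (LQ \<Sigma> (revL L))" "theta \<Sigma> L q \<in> JI (LQ \<Sigma> (revL L))"
    using theta_J pq by auto
  have "q \<subseteq> lderiv [a] p \<longleftrightarrow> theta \<Sigma> L p \<subseteq> lderiv [a] (theta \<Sigma> L q)"
  proof
    assume h: "q \<subseteq> lderiv [a] p"
    show "theta \<Sigma> L p \<subseteq> lderiv [a] (theta \<Sigma> L q)"
    proof
      fix w assume "w \<in> theta \<Sigma> L p"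
      hence "p \<subseteq> lderiv (rev w) L" using theta_mem(2)[OF pq(1)] by blast
      hence "lderiv [a] p \<subseteq> lderiv [a] (lderiv (rev w) L)" by (rule lderiv_mono)
      hence "q \<subseteq> lderiv (rev (a # w)) L" using h by (simp add: lderiv_append)
      hence "a # w \<in> theta \<Sigma> L q" using theta_mem(2)[OF pq(2)] by blast
      thus "w \<in> lderiv [a] (theta \<Sigma> L q)" unfolding lderiv_def by simp
    qed
  next
    assume h: "theta \<Sigma> L p \<subseteq> lderiv [a] (theta \<Sigma> L q)"
    obtain u1 where u1: "p = lderiv u1 L" using JI_deriv[OF pq(1)] by blast
    have "rev u1 \<in> theta \<Sigma> L p" using theta_mem(2)[OF pq(1)] u1 by simp
    hence "a # rev u1 \<in> theta \<Sigma> L q" using h unfolding lderiv_def by auto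
    hence "q \<subseteq> lderiv (u1 @ [a]) L" using theta_mem(2)[OF pq(2)] by simp
    thus "q \<subseteq> lderiv [a] p" using u1 by (simp add: lderiv_append)
  qed
  thus "((p, a, q) \<in> trans (canonical_RFSA \<Sigma> L)) =
       ((theta \<Sigma> L p, a, theta \<Sigma> L q) \<in> {(q, a, p). (p, a, q) \<in> trans (canonical_RFSA \<Sigma> (revL L))})"
    using pq tJ by (simp add: TT_iff)
next
  fix p assume p: "p \<in> JI (LQ \<Sigma> L)"
  have tJ: "theta \<Sigma> L p \<in> JI (LQ \<Sigma> (revL L))" using theta_J p by auto
  show "(p \<in> {X \<in> JI (LQ \<Sigma> L). X \<subseteq> L}) = (theta \<Sigma> L p \<in> {X \<in> JI (LQ \<Sigma> (revL L)). [] \<in> X})"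
    using p tJ theta_mem(2)[OF p, of "[]"] by simp
  obtain u1 where u1: "p = lderiv u1 L" using JI_deriv[OF p] by blast
  have "[] \<in> p \<longleftrightarrow> theta \<Sigma> L p \<subseteq> revL L"
  proof
    assume "[] \<in> p"
    show "theta \<Sigma> L p \<subseteq> revL L"
    proof
      fix w assume "w \<in> theta \<Sigma> L p"
      hence "p \<subseteq> lderiv (rev w) L" using theta_mem(2)[OF p] by blast
      hence "rev w \<in> L" using \<open>[] \<in> p\<close> unfolding lderiv_def by auto
      thus "w \<in> revL L" by (simp add: in_revL)
    qed
  next
    assume "theta \<Sigma> L p \<subseteq> revL L"
    moreover have "rev u1 \<in> theta \<Sigma> L p" using theta_mem(2)[OF p] u1 by simp
    ultimately have "u1 \<in> L" by (auto simp: in_revL)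
    thus "[] \<in> p" using u1 unfolding lderiv_def by simp
  qed
  thus "(p \<in> {X \<in> JI (LQ \<Sigma> L). [] \<in> X}) = (theta \<Sigma> L p \<in> {X \<in> JI (LQ \<Sigma> (revL L)). X \<subseteq> revL L})"
    using p tJ by simp
qed

end

theorem mainTheorem20:
  fixes \<Sigma> :: "'a set" and L :: "'a list set"
  assumes "finite \<Sigma>" and "regular \<Sigma> L"
  shows "(biRFSA \<Sigma> L \<longleftrightarrow> topological \<Sigma> L) \<and>
         (topological \<Sigma> L \<longrightarrow>
            nfa_iso (theta \<Sigma> L) (canonical_RFSA \<Sigma> L) (nfa_rev (canonical_RFSA \<Sigma> (revL L))))"
proof -
  have HL: "L \<subseteq> lists \<Sigma>" using assms(2) by (rule regular_lists)
  have finD: "finite (derivs \<Sigma> L)" using assms(2) by (rule finite_derivs)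
  have finL: "finite (LQ \<Sigma> L)" using finD by (rule finite_LQ)
  have finR: "finite (LQ \<Sigma> (revL L))" using finite_derivs_rev[OF assms(2)] by (rule finite_LQ)
  have top: "topological \<Sigma> L \<longleftrightarrow> (\<forall>j\<in>JI (LQ \<Sigma> L). prime_in (LQ \<Sigma> L) j)"
    unfolding topological_def by (rule dist_iff_prime[OF uclosed_LQ finL])
  have iso: "topological \<Sigma> L \<Longrightarrow> nfa_iso (theta \<Sigma> L) (canonical_RFSA \<Sigma> L) (nfa_rev (canonical_RFSA \<Sigma> (revL L)))"
    using theta_iso[OF HL finD finR] top by blast
  have bi: "biRFSA \<Sigma> L \<Longrightarrow> topological \<Sigma> L"
  proof -
    assume "biRFSA \<Sigma> L"
    then obtain f where f: "nfa_iso f (canonical_RFSA \<Sigma> L) (nfa_rev (canonical_RFSA \<Sigma> (revL L)))"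
      unfolding biRFSA_def nfa_isomorphic_def by blast
    show ?thesis using top biRFSA_prime[OF HL finL finR f] by blast
  qed
  show ?thesis using iso bi unfolding biRFSA_def nfa_isomorphic_def by blast
qed


end
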